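(* Let $\mathbb{K}$ be an algebraically closed field of characteristic $0$. Let $f\in\mathbb{K}[X,Y]$ have degree $d$ and let $G,H\in\mathbb{K}[X,Y]$ have degree $\le\nu-1$, where $\nu\ge d$. Suppose $P\in\mathbb{K}[X,Y]$ and $s\in\mathbb{N}$ satisfy $$\mathbf{d}\Big(\frac{P}{f^s}\Big)=\frac1f\big(G\,\mathbf{d}X+H\,\mathbf{d}Y\big),$$ i.e. $\partial_X(P/f^s)=G/f$ and $\partial_Y(P/f^s)=H/f$, and that $f$ does not divide $P$ if $s\ge1$. Then either $s=1$ and $\deg P\le\nu$, or $s=0$ and $\deg P\le\nu-d$. *)

theory Defs
  imports "HOL-Computational_Algebra.Polynomial"
begin

class alg_closed_field = field +
  assumes alg_closed: "\<lbrakk>n > 0; c n \<noteq> 0\<rbrakk> \<Longrightarrow> \<exists>x. (\<Sum>i\<le>n. c i * x ^ i) = 0"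

text \<open>Bivariate polynomials K[X,Y] are represented as 'a poly poly = (K[X])[Y]:
  the outer variable is Y, the coefficients are polynomials in X.\<close>

definition total_degree :: "'a::zero poly poly \<Rightarrow> nat" where
  "total_degree p = Max (insert 0 {degree (coeff p j) + j | j. coeff p j \<noteq> 0})"

definition dX :: "'a::idom poly poly \<Rightarrow> 'a poly poly" where
  "dX p = map_poly pderiv p"

definition dY :: "'a::idom poly poly \<Rightarrow> 'a poly poly" where
  "dY p = pderiv p"

end

theory Submission
  imports Defs "HOL-Computational_Algebra.Polynomial_Factorial" "HOL-Computational_Algebra.Field_as_Ring"
begin


typedef 'a w = "UNIV :: 'a set" by auto

lemmas Abs_w_inv[simp] = Abs_w_inverse[OF UNIV_I]
declare Rep_w_inverse[simp]

lemma w_eqI: "Rep_w a = Rep_w b \<Longrightarrow> a = b" by (simp add: Rep_w_inject)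

instantiation w :: (field) field
begin
definition "zero_w = Abs_w 0"
definition "one_w = Abs_w 1"
definition "plus_w a b = Abs_w (Rep_w a + Rep_w b)"
definition "minus_w a b = Abs_w (Rep_w a - Rep_w b)"
definition "uminus_w a = Abs_w (- Rep_w a)"
definition "times_w a b = Abs_w (Rep_w a * Rep_w b)"
definition "inverse_w a = Abs_w (inverse (Rep_w a))"
definition "divide_w a b = Abs_w (Rep_w a / Rep_w b)"
instance
  by standard (auto intro!: w_eqI simp: zero_w_def one_w_def plus_w_def minus_w_def uminus_w_def
      times_w_def inverse_w_def divide_w_def algebra_simps field_simps Abs_w_inject)
end

lemma Rep_w_zero[simp]: "Rep_w 0 = 0" by (simp add: zero_w_def)
lemma Rep_w_one[simp]: "Rep_w 1 = 1" by (simp add: one_w_def)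
lemma Rep_w_plus[simp]: "Rep_w (a + b) = Rep_w a + Rep_w b" by (simp add: plus_w_def)
lemma Rep_w_times[simp]: "Rep_w (a * b) = Rep_w a * Rep_w b" by (simp add: times_w_def)
lemma Rep_w_of_nat[simp]: "Rep_w (of_nat n) = of_nat n" by (induct n) auto
lemma Abs_w_zero[simp]: "Abs_w 0 = 0" by (simp add: zero_w_def)
lemma Abs_w_one[simp]: "Abs_w 1 = 1" by (simp add: one_w_def)
lemma Abs_w_plus: "Abs_w (a + b) = Abs_w a + Abs_w b" by (simp add: plus_w_def)
lemma Abs_w_times: "Abs_w (a * b) = Abs_w a * Abs_w b" by (simp add: times_w_def)
lemma Abs_w_of_nat[simp]: "Abs_w (of_nat n) = of_nat n" by (metis Rep_w_inverse Rep_w_of_nat)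

instance w :: (field_char_0) field_char_0
proof
  show "inj (of_nat :: nat \<Rightarrow> 'a w)"
    by (rule injI) (metis Rep_w_of_nat of_nat_eq_iff)
qed

instantiation w :: (field)
  "{unique_euclidean_ring, normalization_euclidean_semiring, normalization_semidom_multiplicative}"
begin
definition [simp]: "normalize_w = (normalize_field :: 'a w \<Rightarrow> _)"
definition [simp]: "unit_factor_w = (unit_factor_field :: 'a w \<Rightarrow> _)"
definition [simp]: "modulo_w = (mod_field :: 'a w \<Rightarrow> _)"
definition [simp]: "euclidean_size_w = (euclidean_size_field :: 'a w \<Rightarrow> _)"
definition [simp]: "division_segment (x :: 'a w) = 1"
instance
  by standard
    (simp_all add: dvd_field_iff field_split_simps split: if_splits)
end

instantiation w :: (field) euclidean_ring_gcd
begin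
definition gcd_w :: "'a w \<Rightarrow> 'a w \<Rightarrow> 'a w" where
  "gcd_w = Euclidean_Algorithm.gcd"
definition lcm_w :: "'a w \<Rightarrow> 'a w \<Rightarrow> 'a w" where
  "lcm_w = Euclidean_Algorithm.lcm"
definition Gcd_w :: "'a w set \<Rightarrow> 'a w" where
 "Gcd_w = Euclidean_Algorithm.Gcd"
definition Lcm_w :: "'a w set \<Rightarrow> 'a w" where
 "Lcm_w = Euclidean_Algorithm.Lcm"
instance by standard (simp_all add: gcd_w_def lcm_w_def Gcd_w_def Lcm_w_def)
end

instance w :: (field) field_gcd ..




lemma pderiv_sum': "pderiv (sum g A) = (\<Sum>x\<in>A. pderiv (g x))"
  by (induction A rule: infinite_finite_induct) (simp_all add: pderiv_add)

lemma coeff_dX: "coeff (dX p) n = pderiv (coeff p n)"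
  by (simp add: dX_def coeff_map_poly)

lemma dX_add: "dX (a + b) = dX a + dX b"
  by (rule poly_eqI) (simp add: coeff_dX pderiv_add)

lemma dX_diff: "dX (a - b) = dX a - dX b"
  by (rule poly_eqI) (simp add: coeff_dX pderiv_diff)

lemma dX_mult: "dX (a * b) = a * dX b + dX a * b"
proof (rule poly_eqI)
  fix n
  have "pderiv (coeff (a*b) n) = (\<Sum>i\<le>n. coeff a i * pderiv (coeff b (n-i)) + pderiv (coeff a i) * coeff b (n-i))"
    unfolding coeff_mult pderiv_sum' by (intro sum.cong) (simp_all add: pderiv_mult algebra_simps)
  thus "coeff (dX (a * b)) n = coeff (a * dX b + dX a * b) n"
    by (simp add: coeff_dX coeff_mult sum.distrib)
qed

lemma dX_1: "dX 1 = 0"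
  by (rule poly_eqI) (simp add: coeff_dX coeff_1)

lemma dX_power: "dX (a ^ n) = of_nat n * a ^ (n - 1) * dX a"
proof (induction n)
  case 0 then show ?case by (simp add: dX_1)
next
  case (Suc n) then show ?case
    by (cases n) (simp_all add: dX_mult dX_1 algebra_simps)
qed

lemma dY_add: "dY (a + b) = dY a + dY b" by (simp add: dY_def pderiv_add)
lemma dY_mult: "dY (a * b) = a * dY b + dY a * b" by (simp add: dY_def pderiv_mult mult.commute)
lemma dY_power: "dY (a ^ n) = of_nat n * a ^ (n - 1) * dY a"
  by (simp add: dY_def pderiv_power of_nat_poly)

lemma ident1: fixes q A B :: "'b::comm_ring_1"
 shows "(q*A*f1) * (q*B*DP + of_nat v * B * Dq * P1) - of_nat s * ((q*A) * Df + of_nat m * A * Dq * f1) * (q*B*P1) = (A*B) * ((of_nat v - of_nat s * of_nat m) * Dq * f1 * P1 + q * (f1 * DP - of_nat s * Df * P1)) * q"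
  by (simp add: algebra_simps)
lemma ident0: fixes q A :: "'b::comm_ring_1"
 shows "(q*A*f1) * (DP) - of_nat s * ((q*A) * Df + of_nat m * A * Dq * f1) * (P1) = A * ((0 - of_nat s * of_nat m) * Dq * f1 * P1 + q * (f1 * DP - of_nat s * Df * P1))"
  by (simp add: algebra_simps)

lemma key_contra:
  fixes D :: "'b::idom \<Rightarrow> 'b"
  assumes Dadd: "\<And>a b. D (a + b) = D a + D b"
    and Dmult: "\<And>a b. D (a * b) = a * D b + D a * b"
    and Dpow: "\<And>a n. D (a ^ n) = of_nat n * a ^ (n - 1) * D a"
    and q: "prime_elem q" and nq: "\<not> q dvd D q"
    and nK: "\<not> q dvd (of_nat v - of_nat s * of_nat m)"
    and m: "v < m" and s: "s \<ge> 2" and f1: "\<not> q dvd f1" and P1: "\<not> q dvd P1"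
    and eq: "(q^m*f1) * D (q^v*P1) - of_nat s * D (q^m*f1) * (q^v*P1) = G * (q^m*f1)^s"
  shows False
proof -
  obtain m' where m': "m = Suc m'" using m by (cases m) auto
  define K :: 'b where "K = of_nat v - of_nat s * of_nat m"
  define Z where "Z = K * D q * f1 * P1 + q * (f1 * D P1 - of_nat s * D f1 * P1)"
  have q0: "q \<noteq> 0" using q by auto
  have d1: "D (q^m*f1) = q^m * D f1 + of_nat m * q^(m-1) * D q * f1"
    unfolding Dmult Dpow by simp
  have d2: "D (q^v*P1) = q^v * D P1 + of_nat v * q^(v-1) * D q * P1"
    unfolding Dmult Dpow by simp
  have L: "(q^m*f1) * D (q^v*P1) - of_nat s * D (q^m*f1) * (q^v*P1) = q^(m'+v) * Z"
  proof (cases v)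
    case 0
    have h: "q^m = q * q^m'" "q^(m-1) = q^m'" "D (q^v*P1) = D P1" "q^v*P1 = P1" "(of_nat v::'b) = 0"
      "q^(m'+v) = q^m'"
      using m' 0 by simp_all
    show ?thesis unfolding d1 unfolding h unfolding ident0 Z_def K_def h ..
  next
    case (Suc v')
    have h: "q^m = q * q^m'" "q^(m-1) = q^m'" "q^v = q * q^v'" "q^(v-1) = q^v'"
      using m' Suc by simp_all
    have "(q^m*f1) * D (q^v*P1) - of_nat s * D (q^m*f1) * (q^v*P1) = q^m' * q^v' * Z * q"
      unfolding d1 d2 unfolding h unfolding ident1 Z_def K_def ..
    also have "\<dots> = q^(m'+v) * Z" using Suc by (simp add: power_add mult_ac)
    finally show ?thesis .
  qed
  have "m * 2 \<le> m * s" using s by (rule mult_le_mono2)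
  hence "m' + v + 1 \<le> m * s" using m m' by linarith
  hence "q^(m'+v+1) dvd q^(m*s)" by (rule le_imp_power_dvd)
  hence "q^(m'+v+1) dvd G * (q^m*f1)^s" by (simp add: power_mult_distrib power_mult dvd_mult2 dvd_mult)
  hence A: "q^(m'+v) * q dvd G * (q^m*f1)^s" by (metis power_add power_one_right)
  have B: "q^(m'+v) * Z = G * (q^m*f1)^s" using eq L by simp
  from A have "q^(m'+v) * q dvd q^(m'+v) * Z" unfolding B .
  hence "q dvd Z" using q0 by simp
  hence "q dvd K * D q * f1 * P1" unfolding Z_def by (simp add: dvd_add_left_iff)
  thus False using q nq f1 P1 nK unfolding K_def by (simp add: prime_elem_dvd_mult_iff)
qed


lemma not_dvd_deriv:
  fixes q :: "'a::field_char_0 poly poly"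
  assumes q0: "q \<noteq> 0" and qu: "\<not> is_unit q"
  shows "\<not> q dvd dY q \<or> \<not> q dvd dX q"
proof (cases "degree q = 0")
  case False
  hence "pderiv q \<noteq> 0" by (simp add: pderiv_eq_0_iff)
  moreover have "degree (pderiv q) < degree q" using False by (simp add: degree_pderiv)
  ultimately have "\<not> q dvd pderiv q" using dvd_imp_degree_le by fastforce
  thus ?thesis by (simp add: dY_def)
next
  case True
  then obtain c where qc: "q = [:c:]" by (rule degree_eq_zeroE)
  have c0: "c \<noteq> 0" using q0 qc by auto
  have "\<not> is_unit c" using qu qc is_unit_const_poly_iff by metis
  hence "degree c \<noteq> 0" using c0 is_unit_iff_degree by blast
  hence "pderiv c \<noteq> 0" "degree (pderiv c) < degree c" by (simp_all add: pderiv_eq_0_iff degree_pderiv)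
  hence "\<not> c dvd pderiv c" using dvd_imp_degree_le by fastforce
  moreover have "dX q = [:pderiv c:]" by (simp add: dX_def qc map_poly_pCons)
  ultimately show ?thesis using qc by simp
qed

lemma s_small_w:
  fixes f G H P :: "'c::{field_char_0,field_gcd} poly poly" and s :: nat
  assumes f0: "f \<noteq> 0" and s: "s \<ge> 2"
    and eqX: "f * dX P - of_nat s * dX f * P = G * f ^ s"
    and eqY: "f * dY P - of_nat s * dY f * P = H * f ^ s"
    and nd: "\<not> f dvd P"
  shows False
proof -
  have P0: "P \<noteq> 0" using nd by auto
  obtain q where q: "prime q" and lt: "multiplicity q P < multiplicity q f"
    using multiplicity_le_imp_dvd[OF f0] nd not_le by blast
  have qe: "prime_elem q" using q by (simp add: prime_imp_prime_elem)
  have qn: "q \<noteq> 0" "\<not> is_unit q" using qe by (auto simp: prime_elem_not_unit)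
  define m where "m = multiplicity q f"
  define v where "v = multiplicity q P"
  obtain f1 where f1: "f = q^m * f1" "\<not> q dvd f1"
    using multiplicity_decompose'[OF f0 qn(2)] m_def by metis
  obtain P1 where P1: "P = q^v * P1" "\<not> q dvd P1"
    using multiplicity_decompose'[OF P0 qn(2)] v_def by metis
  have vm: "v < m" using lt m_def v_def by simp
  have nK: "\<not> q dvd (of_nat v - of_nat s * of_nat m)"
  proof
    define k where "k = int v - int s * int m"
    have "m \<le> s * m" using s by simp
    hence "int m \<le> int s * int m" by (metis of_nat_le_iff of_nat_mult)
    hence k0: "k \<noteq> 0" using vm unfolding k_def by linarith
    have K: "(of_nat v - of_nat s * of_nat m :: 'c poly poly) = [:[:of_int k:]:]"
    proof -
      have "(of_nat v - of_nat s * of_nat m :: 'c poly poly) = of_int k" by (simp add: k_def)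
      also have "\<dots> = [:[:of_int k:]:]" by (simp add: of_int_poly)
      finally show ?thesis .
    qed
    have "is_unit [:of_int k :: 'c:]" using k0 by (simp add: is_unit_triv)
    hence u: "is_unit (of_nat v - of_nat s * of_nat m :: 'c poly poly)"
      unfolding K by (simp add: is_unit_const_poly_iff)
    assume "q dvd (of_nat v - of_nat s * of_nat m)"
    hence "is_unit q" using u by (rule dvd_unit_imp_unit)
    thus False using qn by simp
  qed
  from not_dvd_deriv[OF qn] show False
  proof
    assume a: "\<not> q dvd dY q"
    show False
    proof -
      have e: "(q^m*f1) * dY (q^v*P1) - of_nat s * dY (q^m*f1) * (q^v*P1) = H * (q^m*f1)^s"
        using eqY unfolding f1(1) P1(1) .
      show False by (rule key_contra[OF dY_add dY_mult dY_power qe a nK vm s f1(2) P1(2) e])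
    qed
  next
    assume a: "\<not> q dvd dX q"
    show False
    proof -
      have e: "(q^m*f1) * dX (q^v*P1) - of_nat s * dX (q^m*f1) * (q^v*P1) = G * (q^m*f1)^s"
        using eqX unfolding f1(1) P1(1) .
      show False by (rule key_contra[OF dX_add dX_mult dX_power qe a nK vm s f1(2) P1(2) e])
    qed
  qed
qed




lemma map_poly_hom_add:
  assumes h0: "h 0 = 0" and ha: "\<And>x y. h (x + y) = h x + h y"
  shows "map_poly h (p + q) = map_poly h p + map_poly h q"
  by (rule poly_eqI) (simp add: coeff_map_poly h0 ha)

lemma map_poly_hom_mult:
  assumes h0: "h 0 = 0" and ha: "\<And>x y. h (x + y) = h x + h y"
    and hm: "\<And>x y. h (x * y) = h x * h y"
  shows "map_poly h (p * q) = map_poly h p * map_poly h q"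
proof (rule poly_eqI)
  fix n
  have "h (\<Sum>i\<le>n. coeff p i * coeff q (n - i)) = (\<Sum>i\<le>n. h (coeff p i * coeff q (n - i)))"
    using sum_comp_morphism[of h "\<lambda>i. coeff p i * coeff q (n - i)" "{..n}", OF h0 ha]
    by (simp add: o_def)
  thus "coeff (map_poly h (p * q)) n = coeff (map_poly h p * map_poly h q) n"
    by (simp add: coeff_map_poly h0 coeff_mult hm)
qed

lemma map_poly_hom_0: "h 0 = 0 \<Longrightarrow> map_poly h 0 = 0" by simp

definition Wt :: "'a::field poly poly \<Rightarrow> 'a w poly poly" where
  "Wt = map_poly (map_poly Abs_w)"
definition Vt :: "'a w poly poly \<Rightarrow> 'a::field poly poly" where
  "Vt = map_poly (map_poly Rep_w)"

lemma h1_add: "map_poly Abs_w (x + y) = map_poly Abs_w x + map_poly Abs_w y"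
  by (rule map_poly_hom_add) (simp_all add: Abs_w_plus)
lemma h1_mult: "map_poly Abs_w (x * y) = map_poly Abs_w x * map_poly Abs_w y"
  by (rule map_poly_hom_mult) (simp_all add: Abs_w_plus Abs_w_times)
lemma Wt_add: "Wt (x + y) = Wt x + Wt y"
  unfolding Wt_def by (rule map_poly_hom_add) (simp_all add: h1_add)
lemma Wt_mult: "Wt (x * y) = Wt x * Wt y"
  unfolding Wt_def by (rule map_poly_hom_mult) (simp_all add: h1_add h1_mult)
lemma Wt_diff: "Wt (x - y) = Wt x - Wt y"
  by (metis Wt_add diff_add_cancel eq_diff_eq)
lemma Wt_1: "Wt 1 = 1" by (simp add: Wt_def)
lemma Wt_power: "Wt (x ^ n) = Wt x ^ n"
  by (induct n) (simp_all add: Wt_1 Wt_mult)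
lemma Wt_of_nat: "Wt (of_nat n) = of_nat n"
  by (simp add: Wt_def of_nat_poly map_poly_pCons)

lemma h2_add: "map_poly Rep_w (x + y) = map_poly Rep_w x + map_poly Rep_w y"
  by (rule map_poly_hom_add) simp_all
lemma h2_mult: "map_poly Rep_w (x * y) = map_poly Rep_w x * map_poly Rep_w y"
  by (rule map_poly_hom_mult) simp_all
lemma Vt_mult: "Vt (x * y) = Vt x * Vt y"
  unfolding Vt_def by (rule map_poly_hom_mult) (simp_all add: h2_add h2_mult)
lemma Vt_Wt: "Vt (Wt x) = x"
  unfolding Vt_def Wt_def by (simp add: map_poly_map_poly o_def)

lemma h1_pderiv: "map_poly Abs_w (pderiv c) = pderiv (map_poly Abs_w c)"
  by (rule poly_eqI) (simp add: coeff_map_poly coeff_pderiv Abs_w_times Abs_w_plus)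

lemma Wt_dX: "Wt (dX p) = dX (Wt p)"
  unfolding Wt_def dX_def by (simp add: map_poly_map_poly o_def h1_pderiv)

lemma h1_of_nat: "map_poly Abs_w (of_nat n) = of_nat n"
  by (simp add: of_nat_poly map_poly_pCons)

lemma Wt_dY: "Wt (dY p) = dY (Wt p)"
  unfolding Wt_def dY_def
  by (rule poly_eqI) (simp add: coeff_map_poly coeff_pderiv h1_mult h1_of_nat del: of_nat_Suc)

lemma s_le_1:
  fixes f G H P :: "'a::field_char_0 poly poly" and s :: nat
  assumes f0: "f \<noteq> 0"
    and eqX: "f * dX P - of_nat s * dX f * P = G * f ^ s"
    and eqY: "f * dY P - of_nat s * dY f * P = H * f ^ s"
    and nd: "s \<ge> 1 \<longrightarrow> \<not> f dvd P"
  shows "s \<le> 1"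
proof (rule ccontr)
  assume "\<not> s \<le> 1"
  hence s: "s \<ge> 2" by simp
  have "Wt f \<noteq> 0" using f0 Vt_Wt by (metis Wt_def map_poly_0)
  moreover have "Wt f * dX (Wt P) - of_nat s * dX (Wt f) * Wt P = Wt G * Wt f ^ s"
    using arg_cong[OF eqX, of Wt] by (simp add: Wt_diff Wt_mult Wt_power Wt_of_nat Wt_dX)
  moreover have "Wt f * dY (Wt P) - of_nat s * dY (Wt f) * Wt P = Wt H * Wt f ^ s"
    using arg_cong[OF eqY, of Wt] by (simp add: Wt_diff Wt_mult Wt_power Wt_of_nat Wt_dY)
  moreover have "\<not> Wt f dvd Wt P"
  proof
    assume "Wt f dvd Wt P"
    then obtain c where "Wt P = Wt f * c" by (auto elim: dvdE)
    hence "Vt (Wt P) = Vt (Wt f) * Vt c" by (simp add: Vt_mult)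
    hence "P = f * Vt c" by (simp add: Vt_Wt)
    thus False using nd s by auto
  qed
  ultimately show False using s_small_w s by blast
qed




definition XYm :: "'a::comm_ring_1 poly poly" where "XYm = pCons 0 [:[:0,1:]:]"
definition hc :: "'a::comm_ring_1 poly \<Rightarrow> 'a poly poly" where
  "hc c = poly (map_poly (\<lambda>a. [:[:a:]:]) c) XYm"
definition sig :: "'a::comm_ring_1 poly poly \<Rightarrow> 'a poly poly" where
  "sig p = poly (map_poly hc p) [:0,1:]"

lemma hc_0[simp]: "hc 0 = 0" by (simp add: hc_def)
lemma hc_pCons: "hc (pCons a c) = [:[:a:]:] + XYm * hc c"
  by (simp add: hc_def map_poly_pCons)
lemma sig_pCons: "sig (pCons a p) = hc a + [:0,1:] * sig p"
  by (simp add: sig_def map_poly_pCons)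

lemma X_mult: "[:0,1:] * v = pCons 0 (v::'a::comm_ring_1 poly)"
  by (simp add: mult_pCons_left)
lemma XYm_mult: "XYm * r = pCons 0 (smult [:0,1:] r)"
  by (simp add: XYm_def mult_pCons_left)

lemma coeff_hc: "coeff (coeff (hc c) k) i = (if i = k then coeff c i else 0)"
proof (induction c arbitrary: k i)
  case 0 then show ?case by simp
next
  case (pCons a c)
  show ?case
    by (cases k; cases i) (simp_all add: hc_pCons XYm_mult X_mult pCons.IH coeff_pCons)
qed

lemma coeff_sig: "coeff (coeff (sig p) k) i = (if i \<le> k then coeff (coeff p (k - i)) i else 0)"
proof (induction p arbitrary: k i)
  case 0 then show ?case by (simp add: sig_def)
next
  case (pCons a p)
  show ?case
  proof (cases k)
    case 0 then show ?thesis by (simp add: sig_pCons X_mult coeff_hc)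
  next
    case (Suc k')
    then show ?thesis
      by (auto simp add: sig_pCons X_mult coeff_hc pCons.IH Suc_diff_le)
  qed
qed

lemma c2_add: "[:[:a + b:]:] = [:[:a:]:] + [:[:b:]:]" by simp
lemma c2_mult: "[:[:a * b:]:] = [:[:a:]:] * [:[:b:]:]" by (simp add: mult_to_poly)

lemma hc_add: "hc (a + b) = hc a + hc b"
  unfolding hc_def by (subst map_poly_hom_add) (simp_all add: poly_add)
lemma hc_mult: "hc (a * b) = hc a * hc b"
  unfolding hc_def by (subst map_poly_hom_mult) (simp_all add: poly_mult mult_to_poly)
lemma sig_add: "sig (a + b) = sig a + sig b"
  unfolding sig_def by (subst map_poly_hom_add) (simp_all add: poly_add hc_add)
lemma sig_mult: "sig (a * b) = sig a * sig b"
  unfolding sig_def by (subst map_poly_hom_mult) (simp_all add: poly_mult hc_add hc_mult)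
lemma sig_diff: "sig (a - b) = sig a - sig b"
  by (metis sig_add diff_add_cancel eq_diff_eq)
lemma sig_1: "sig 1 = 1"
  by (simp add: sig_def hc_def map_poly_1 one_pCons[symmetric])
lemma sig_0[simp]: "sig 0 = 0" by (simp add: sig_def)
lemma sig_power: "sig (x ^ n) = sig x ^ n"
  by (induct n) (simp_all add: sig_1 sig_mult)
lemma sig_of_nat: "sig (of_nat n) = of_nat n"
  by (induct n) (simp_all add: sig_1 sig_add)

lemma Ypd: "coeff (pCons 0 (pderiv r)) k = of_nat k * coeff r k"
  by (cases k) (simp_all add: coeff_pderiv del: of_nat_Suc)

lemma coeff_of_nat_mult: "coeff (of_nat n * u) i = of_nat n * coeff u i"
  by (simp add: of_nat_poly)

lemma cE: "coeff (coeff ([:[:0,1:]:] * dX p + [:0,1:] * dY p) j) i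
    = of_nat (i + j) * coeff (coeff p j) i"
proof -
  have "coeff ([:[:0,1:]:] * dX p) j = pCons 0 (pderiv (coeff p j))"
    by (simp add: coeff_dX X_mult)
  moreover have "coeff ([:0,1:] * dY p) j = of_nat j * coeff p j"
    unfolding X_mult dY_def by (rule Ypd)
  ultimately show ?thesis by (simp add: Ypd coeff_of_nat_mult algebra_simps)
qed

lemma sig_E: "sig ([:[:0,1:]:] * dX p + [:0,1:] * dY p) = pCons 0 (pderiv (sig p))"
proof (intro poly_eqI)
  fix k i
  show "coeff (coeff (sig ([:[:0,1:]:] * dX p + [:0,1:] * dY p)) k) i =
        coeff (coeff (pCons 0 (pderiv (sig p))) k) i"
    unfolding Ypd coeff_of_nat_mult coeff_sig cE by simp
qed




lemma hc_1: "hc 1 = 1" by (simp add: hc_def map_poly_1 one_pCons[symmetric])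

lemma coeff_mult_le:
  assumes "degree A \<le> m" "degree B \<le> n"
  shows "coeff (A * B) (m + n) = coeff A m * coeff B n"
proof -
  have "coeff (A * B) (m + n) = (\<Sum>i\<le>m+n. if i = m then coeff A m * coeff B n else 0)"
    unfolding coeff_mult
  proof (rule sum.cong)
    fix i assume i: "i \<in> {..m+n}"
    show "coeff A i * coeff B (m + n - i) = (if i = m then coeff A m * coeff B n else 0)"
    proof (cases "i < m")
      case True
      hence "coeff B (m + n - i) = 0" using assms(2) by (intro coeff_eq_0) linarith
      thus ?thesis using True by simp
    next
      case False
      show ?thesis
      proof (cases "i = m")
        case False
        hence "coeff A i = 0" using assms(1) \<open>\<not> i < m\<close> by (intro coeff_eq_0) linarith
        thus ?thesis using False by simp
      qed simp
    qed
  qed simp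
  also have "\<dots> = coeff A m * coeff B n" by simp
  finally show ?thesis .
qed

lemma sig_degree:
  fixes p :: "'a::comm_ring_1 poly poly"
  shows "degree (sig p) = total_degree p \<and> (p \<noteq> 0 \<longrightarrow> sig p \<noteq> 0)"
proof -
  define S where "S = {degree (coeff p j) + j | j. coeff p j \<noteq> 0}"
  have TD: "total_degree p = Max (insert 0 S)" by (simp add: total_degree_def S_def)
  have "S \<subseteq> (\<lambda>j. degree (coeff p j) + j) ` {..degree p}"
    unfolding S_def using le_degree by fastforce
  hence fin: "finite (insert 0 S)" using finite_subset by blast
  have nz: "coeff (sig p) (degree (coeff p j) + j) \<noteq> 0 \<and> degree (coeff p j) + j \<le> degree (sig p)"
    if cj: "coeff p j \<noteq> 0" for j
  proof -
    have "coeff (coeff (sig p) (degree (coeff p j) + j)) (degree (coeff p j)) \<noteq> 0"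
      unfolding coeff_sig using cj by simp
    hence "coeff (sig p) (degree (coeff p j) + j) \<noteq> 0" by auto
    thus ?thesis using le_degree by blast
  qed
  have le1: "degree (sig p) \<le> total_degree p"
  proof (rule degree_le, intro allI impI)
    fix k assume k: "total_degree p < k"
    show "coeff (sig p) k = 0"
    proof (rule poly_eqI)
      fix i
      show "coeff (coeff (sig p) k) i = coeff 0 i"
      proof (cases "i \<le> k \<and> coeff (coeff p (k - i)) i \<noteq> 0")
        case True
        hence c: "coeff p (k - i) \<noteq> 0" by auto
        have "i \<le> degree (coeff p (k - i))" using True le_degree by blast
        moreover have "degree (coeff p (k - i)) + (k - i) \<le> total_degree p"
          unfolding TD using fin c by (intro Max_ge) (auto simp: S_def)
        ultimately show ?thesis using k True by linarith
      next
        case False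
        thus ?thesis unfolding coeff_sig by auto
      qed
    qed
  qed
  have le2: "total_degree p \<le> degree (sig p)"
  proof -
    have "total_degree p \<in> insert 0 S" unfolding TD using fin by (intro Max_in) auto
    thus ?thesis using nz unfolding S_def by auto
  qed
  have "p \<noteq> 0 \<longrightarrow> sig p \<noteq> 0"
  proof
    assume "p \<noteq> 0"
    hence "coeff p (degree p) \<noteq> 0" by simp
    thus "sig p \<noteq> 0" using nz by fastforce
  qed
  thus ?thesis using le1 le2 by simp
qed

theorem lemma1p2:
  fixes f G H P :: "'a::{alg_closed_field, field_char_0} poly poly"
    and d \<nu> s :: nat
  assumes f_nz: "f \<noteq> 0"
    and f_deg: "total_degree f = d"
    and G_deg: "G \<noteq> 0 \<longrightarrow> total_degree G \<le> \<nu> - 1"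
    and H_deg: "H \<noteq> 0 \<longrightarrow> total_degree H \<le> \<nu> - 1"
    and G_nu: "G \<noteq> 0 \<longrightarrow> \<nu> \<ge> 1"
    and H_nu: "H \<noteq> 0 \<longrightarrow> \<nu> \<ge> 1"
    and nu_ge: "\<nu> \<ge> d"
    and eqX: "f * dX P - of_nat s * dX f * P = G * f ^ s"
    and eqY: "f * dY P - of_nat s * dY f * P = H * f ^ s"
    and ndvd: "s \<ge> 1 \<longrightarrow> \<not> f dvd P"
  shows "(s = 1 \<and> total_degree P \<le> \<nu>) \<or> (s = 0 \<and> total_degree P \<le> \<nu> - d)"
proof -
  have s1: "s \<le> 1" using s_le_1[OF f_nz eqX eqY ndvd] .
  define Xc :: "'a poly poly" where "Xc = [:[:0,1:]:]"
  define Yv :: "'a poly poly" where "Yv = [:0,1:]"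
  define E where "E = (\<lambda>p. Xc * dX p + Yv * dY p)"
  have EQ: "f * E P - of_nat s * E f * P = (Xc * G + Yv * H) * f ^ s"
  proof -
    have "Xc * (f * dX P - of_nat s * dX f * P) + Yv * (f * dY P - of_nat s * dY f * P)
        = Xc * (G * f ^ s) + Yv * (H * f ^ s)" by (simp add: eqX eqY)
    thus ?thesis unfolding E_def by (simp add: algebra_simps)
  qed
  define F where "F = sig f"
  define Q where "Q = sig P"
  define W where "W = sig (Xc * G + Yv * H)"
  have sE: "sig (E p) = pCons 0 (pderiv (sig p))" for p
    unfolding E_def Xc_def Yv_def by (rule sig_E)
  have EQ': "F * pCons 0 (pderiv Q) - of_nat s * pCons 0 (pderiv F) * Q = W * F ^ s"
    using arg_cong[OF EQ, of sig] unfolding F_def Q_def W_def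
    by (simp add: sig_diff sig_mult sig_power sig_of_nat sE)
  have dF: "degree F = d" using sig_degree[of f] f_deg F_def by simp
  have F0: "F \<noteq> 0" using sig_degree[of f] f_nz F_def by simp
  have dQ: "degree Q = total_degree P" using sig_degree[of P] Q_def by simp
  have sXc: "sig Xc = XYm" by (simp add: Xc_def sig_pCons hc_pCons hc_1 XYm_def one_pCons[symmetric])
  have sYv: "sig Yv = [:0,1:]" by (simp add: Yv_def sig_pCons hc_pCons hc_1 sig_1 one_pCons[symmetric])
  have dW: "degree W \<le> \<nu>"
  proof -
    have a: "degree (sig Xc * sig G) \<le> \<nu>"
    proof (cases "G = 0")
      case True thus ?thesis by simp
    next
      case False
      have "degree (sig Xc * sig G) \<le> degree (sig Xc) + degree (sig G)" by (rule degree_mult_le)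
      also have "degree (sig Xc) \<le> 1" unfolding sXc XYm_def by simp
      moreover have "degree (sig G) \<le> \<nu> - 1" using sig_degree[of G] G_deg False by simp
      ultimately show ?thesis using G_nu False by linarith
    qed
    have b: "degree (sig Yv * sig H) \<le> \<nu>"
    proof (cases "H = 0")
      case True thus ?thesis by simp
    next
      case False
      have "degree (sig Yv * sig H) \<le> degree (sig Yv) + degree (sig H)" by (rule degree_mult_le)
      also have "degree (sig Yv) \<le> 1" unfolding sYv by simp
      moreover have "degree (sig H) \<le> \<nu> - 1" using sig_degree[of H] H_deg False by simp
      ultimately show ?thesis using H_nu False by linarith
    qed
    show ?thesis unfolding W_def sig_add sig_mult using a b by (rule degree_add_le)
  qed
  show ?thesis
  proof (cases "P = 0")
    case True
    have "total_degree P = 0" using True dQ Q_def by simp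
    moreover have "s = 0" using True ndvd s1 by auto
    ultimately show ?thesis by simp
  next
    case False
    hence Q0: "Q \<noteq> 0" using sig_degree[of P] Q_def by simp
    define p where "p = degree Q"
    have key: "d + p \<le> \<nu> + s * d" if ne: "p \<noteq> s * d"
    proof -
      define L where "L = F * pCons 0 (pderiv Q) - of_nat s * pCons 0 (pderiv F) * Q"
      have dpQ: "degree (pCons 0 (pderiv Q)) \<le> p"
      proof (cases "p = 0")
        case True thus ?thesis by (simp add: p_def pderiv_eq_0_iff)
      next
        case False thus ?thesis using degree_pCons_le[of 0 "pderiv Q"]
          by (simp add: p_def degree_pderiv)
      qed
      have dpF: "degree (of_nat s * pCons 0 (pderiv F)) \<le> d"
      proof -
        have "degree (of_nat s * pCons 0 (pderiv F)) \<le> degree (pCons 0 (pderiv F))"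
          by (simp add: of_nat_poly degree_smult_le)
        also have "\<dots> \<le> d"
        proof (cases "d = 0")
          case True thus ?thesis using dF by (simp add: pderiv_eq_0_iff)
        next
          case False thus ?thesis using degree_pCons_le[of 0 "pderiv F"] dF
            by (simp add: degree_pderiv)
        qed
        finally show ?thesis .
      qed
      have c1: "coeff (F * pCons 0 (pderiv Q)) (d + p) = lead_coeff F * (of_nat p * lead_coeff Q)"
        using coeff_mult_le[OF _ dpQ, of F d] dF p_def by (simp add: Ypd)
      have c2: "coeff (of_nat s * pCons 0 (pderiv F) * Q) (d + p)
          = of_nat s * (of_nat d * lead_coeff F) * lead_coeff Q"
      proof -
        have c2a: "coeff (of_nat s * pCons 0 (pderiv F)) d = of_nat s * (of_nat d * lead_coeff F)"
          unfolding coeff_of_nat_mult Ypd dF ..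
        have "coeff (of_nat s * pCons 0 (pderiv F) * Q) (d + p)
           = coeff (of_nat s * pCons 0 (pderiv F)) d * coeff Q p"
          by (rule coeff_mult_le[OF dpF]) (simp add: p_def)
        thus ?thesis unfolding c2a p_def .
      qed
      have cL: "coeff L (d + p) = (of_nat p - of_nat s * of_nat d) * lead_coeff F * lead_coeff Q"
        unfolding L_def coeff_diff c1 c2 by (simp add: algebra_simps)
      have "(of_nat p - of_nat s * of_nat d :: 'a poly) \<noteq> 0"
        using ne by (metis eq_iff_diff_eq_0 of_nat_eq_iff of_nat_mult)
      hence "coeff L (d + p) \<noteq> 0" unfolding cL using F0 Q0 by simp
      hence "d + p \<le> degree L" by (rule le_degree)
      also have "L = W * F ^ s" unfolding L_def by (rule EQ')
      also have "W \<noteq> 0" using \<open>coeff L (d + p) \<noteq> 0\<close> \<open>L = W * F ^ s\<close> by auto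
      hence "degree (W * F ^ s) = degree W + s * d"
        using F0 dF by (simp add: degree_mult_eq degree_power_eq)
      finally show ?thesis using dW by linarith
    qed
    show ?thesis
    proof (cases "s = 0")
      case True
      have "p \<le> \<nu> - d"
      proof (cases "p = 0")
        case False thus ?thesis using key True by simp
      qed simp
      thus ?thesis using True dQ p_def by simp
    next
      case False
      hence s_eq: "s = 1" using s1 by simp
      have "p \<le> \<nu>"
      proof (cases "p = d")
        case True thus ?thesis using nu_ge by simp
      next
        case False thus ?thesis using key s_eq by simp
      qed
      thus ?thesis using s_eq dQ p_def by simp
    qed
  qed
qed


end
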